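(* Let $\mathcal{S}$ be an accessible subgroup of $\mathrm{GL}(d,\mathbb{R})$. Then there exists $K>0$ such that for all $u,v\in\mathbb{R}P^{d-1}$ there is $R_{u,v}\in\mathcal{S}$ with $\|R_{u,v}^{\pm1}\|\le K$ and $R_{u,v}u=v$.
   Context: A subgroup $\mathcal{S}\subseteq\mathrm{GL}(d,\mathbb{R})$ is accessible if it is a non-empty closed subgroup acting transitively on the projective space $\mathbb{R}P^{d-1}$, i.e. for all $u,v\in\mathbb{R}P^{d-1}$ there is $R\in\mathcal{S}$ with $Ru=v$. $\|\cdot\|$ is an operator norm. *)

theory Defs
  imports "HOL-Analysis.Analysis"
begin

text \<open>GL(d,R) realised as the invertible d x d real matrices, d = CARD('n).\<close>
definition GL :: "(real^'n^'n) set" where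
  "GL = {A. invertible A}"

definition is_GL_subgroup :: "(real^'n^'n) set \<Rightarrow> bool" where
  "is_GL_subgroup S \<longleftrightarrow> S \<subseteq> GL \<and> mat 1 \<in> S \<and>
     (\<forall>A\<in>S. \<forall>B\<in>S. A ** B \<in> S) \<and> (\<forall>A\<in>S. matrix_inv A \<in> S)"

text \<open>Equality of the points of RP^(d-1) represented by nonzero vectors x, y.\<close>
definition proj_eq :: "real^'n \<Rightarrow> real^'n \<Rightarrow> bool" where
  "proj_eq x y \<longleftrightarrow> (\<exists>c. c \<noteq> 0 \<and> x = c *\<^sub>R y)"

definition accessible :: "(real^'n^'n) set \<Rightarrow> bool" where
  "accessible S \<longleftrightarrow> S \<noteq> {} \<and> is_GL_subgroup S \<and> closedin (top_of_set GL) S \<and>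
     (\<forall>u v. u \<noteq> 0 \<longrightarrow> v \<noteq> 0 \<longrightarrow> (\<exists>R\<in>S. proj_eq (R *v u) v))"

end

theory Submission
  imports Defs
begin


lemma inv_facts:
  fixes R :: "real^'n^'n"
  assumes "invertible R"
  shows "R ** matrix_inv R = mat 1 \<and> matrix_inv R ** R = mat 1"
  using assms unfolding invertible_def matrix_inv_def by (rule someI_ex)

lemma right_inv_imp:
  fixes R Q :: "real^'n^'n"
  assumes "R ** Q = mat 1"
  shows "invertible R \<and> matrix_inv R = Q"
proof -
  have iR: "invertible R" using assms invertible_right_inverse by blast
  have "matrix_inv R = matrix_inv R ** (R ** Q)" using assms by (simp add: matrix_mul_rid)
  also have "\<dots> = (matrix_inv R ** R) ** Q" by (simp add: matrix_mul_assoc)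
  also have "\<dots> = Q" using inv_facts[OF iR] by (simp add: matrix_mul_lid)
  finally show ?thesis using iR by simp
qed

lemma onorm_le_iff:
  fixes A :: "real^'n^'m"
  shows "onorm ((*v) A) \<le> K \<longleftrightarrow> (\<forall>x. norm (A *v x) \<le> K * norm x)"
proof
  assume a: "onorm ((*v) A) \<le> K"
  show "\<forall>x. norm (A *v x) \<le> K * norm x"
  proof
    fix x
    have "norm (A *v x) \<le> onorm ((*v) A) * norm x"
      using onorm[OF matrix_vector_mul_bounded_linear] by blast
    also have "\<dots> \<le> K * norm x" using a by (simp add: mult_right_mono)
    finally show "norm (A *v x) \<le> K * norm x" .
  qed
next
  assume "\<forall>x. norm (A *v x) \<le> K * norm x"
  then show "onorm ((*v) A) \<le> K" by (intro onorm_le) auto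
qed

lemma cont_mm: "continuous_on UNIV (\<lambda>p::((real^'n^'n) \<times> (real^'n^'n)). fst p ** snd p)"
  unfolding matrix_matrix_mult_def by (intro continuous_intros)

lemma cont_mv: "continuous_on UNIV (\<lambda>A::real^'n^'m. A *v x)"
  unfolding matrix_vector_mult_def by (intro continuous_intros)

lemma bounded_entries:
  "bounded {A::real^'n^'m. \<forall>i j. \<bar>A$i$j\<bar> \<le> K}"
proof -
  have "norm A \<le> real CARD('m) * real CARD('n) * K" if "\<forall>i j. \<bar>A$i$j\<bar> \<le> K" for A :: "real^'n^'m"
  proof -
    have "norm A \<le> (\<Sum>i\<in>UNIV. norm (A$i))" unfolding norm_vec_def by (rule L2_set_le_sum) auto
    also have "\<dots> \<le> (\<Sum>i\<in>(UNIV::'m set). real CARD('n) * K)"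
    proof (rule sum_mono)
      fix i
      have "norm (A$i) \<le> (\<Sum>j\<in>UNIV. \<bar>A$i$j\<bar>)" by (rule norm_le_l1_cart)
      also have "\<dots> \<le> (\<Sum>j\<in>(UNIV::'n set). K)" using that by (intro sum_mono) auto
      finally show "norm (A$i) \<le> real CARD('n) * K" by simp
    qed
    finally show ?thesis by simp
  qed
  then show ?thesis unfolding bounded_iff by blast
qed

definition bnd :: "real \<Rightarrow> real^'n^'n \<Rightarrow> bool" where
  "bnd K R \<longleftrightarrow> onorm ((*v) R) \<le> K \<and> onorm ((*v) (matrix_inv R)) \<le> K"

lemma compact_SK:
  fixes S :: "(real^'n^'n) set"
  assumes cl: "closedin (top_of_set GL) S"
  shows "compact {R\<in>S. bnd K R}"
proof -
  obtain C where C: "closed C" "S = GL \<inter> C" using cl closedin_closed by blast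
  define T where "T = {p::((real^'n^'n) \<times> (real^'n^'n)). fst p ** snd p = mat 1 \<and> fst p \<in> C \<and>
      (\<forall>x. norm (fst p *v x) \<le> K * norm x) \<and> (\<forall>x. norm (snd p *v x) \<le> K * norm x)}"
  have "closed T"
  proof -
    have c1: "closed {p::((real^'n^'n) \<times> (real^'n^'n)). fst p ** snd p = mat 1}"
      by (rule closed_Collect_eq) (auto intro: cont_mm continuous_intros)
    have c2: "closed {p::((real^'n^'n) \<times> (real^'n^'n)). fst p \<in> C}"
    proof -
      have "{p::((real^'n^'n) \<times> (real^'n^'n)). fst p \<in> C} = C \<times> UNIV" by auto
      then show ?thesis using closed_Times[OF C(1) closed_UNIV] by simp
    qed
    have c3: "closed {p::((real^'n^'n) \<times> (real^'n^'n)). \<forall>x. norm (fst p *v x) \<le> K * norm x}"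
    proof (rule closed_Collect_all)
      fix x
      have "continuous_on UNIV (\<lambda>p::((real^'n^'n) \<times> (real^'n^'n)). norm (fst p *v x))"
        unfolding matrix_vector_mult_def by (intro continuous_intros)
      then show "closed {p::((real^'n^'n) \<times> (real^'n^'n)). norm (fst p *v x) \<le> K * norm x}"
        by (rule closed_Collect_le[OF _ continuous_on_const])
    qed
    have c4: "closed {p::((real^'n^'n) \<times> (real^'n^'n)). \<forall>x. norm (snd p *v x) \<le> K * norm x}"
    proof (rule closed_Collect_all)
      fix x
      have "continuous_on UNIV (\<lambda>p::((real^'n^'n) \<times> (real^'n^'n)). norm (snd p *v x))"
        unfolding matrix_vector_mult_def by (intro continuous_intros)
      then show "closed {p::((real^'n^'n) \<times> (real^'n^'n)). norm (snd p *v x) \<le> K * norm x}"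
        by (rule closed_Collect_le[OF _ continuous_on_const])
    qed
    have "T = {p. fst p ** snd p = mat 1} \<inter> {p. fst p \<in> C} \<inter>
       {p. \<forall>x. norm (fst p *v x) \<le> K * norm x} \<inter> {p. \<forall>x. norm (snd p *v x) \<le> K * norm x}"
      unfolding T_def by blast
    then show ?thesis using c1 c2 c3 c4 by (simp add: closed_Int)
  qed
  moreover have "bounded T"
  proof -
    have "T \<subseteq> {A::real^'n^'n. \<forall>i j. \<bar>A$i$j\<bar> \<le> K} \<times> {A::real^'n^'n. \<forall>i j. \<bar>A$i$j\<bar> \<le> K}"
    proof (clarsimp simp: T_def)
      fix A B :: "real^'n^'n"
      assume "\<forall>x. norm (A *v x) \<le> K * norm x" "\<forall>x. norm (B *v x) \<le> K * norm x"
      then have "onorm ((*v) A) \<le> K" "onorm ((*v) B) \<le> K" using onorm_le_iff by blast+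
      then show "(\<forall>i j. \<bar>A$i$j\<bar> \<le> K) \<and> (\<forall>i j. \<bar>B$i$j\<bar> \<le> K)"
        using order_trans[OF matrix_component_le_onorm] by blast
    qed
    then show ?thesis by (rule bounded_subset[OF bounded_Times[OF bounded_entries bounded_entries]])
  qed
  ultimately have "compact T" using compact_eq_bounded_closed by blast
  then have "compact (fst ` T)" by (intro compact_continuous_image continuous_intros)
  moreover have "fst ` T = {R\<in>S. bnd K R}"
  proof
    show "fst ` T \<subseteq> {R\<in>S. bnd K R}"
    proof clarsimp
      fix A B assume "(A, B) \<in> T"
      then have h: "A ** B = mat 1" "A \<in> C" "\<forall>x. norm (A *v x) \<le> K * norm x"
        "\<forall>x. norm (B *v x) \<le> K * norm x" unfolding T_def by auto
      from right_inv_imp[OF h(1)] have "invertible A" "matrix_inv A = B" by auto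
      then show "A \<in> S \<and> bnd K A" using h C(2) unfolding bnd_def GL_def
        by (simp add: onorm_le_iff)
    qed
  next
    show "{R\<in>S. bnd K R} \<subseteq> fst ` T"
    proof clarsimp
      fix R assume R: "R \<in> S" "bnd K R"
      then have "invertible R" using C(2) GL_def by auto
      then have "(R, matrix_inv R) \<in> T" using R C(2) inv_facts unfolding T_def bnd_def
        by (auto simp: onorm_le_iff)
      then show "R \<in> fst ` T" by force
    qed
  qed
  ultimately show ?thesis by simp
qed

lemma proj_eq_refl: "proj_eq x x"
  unfolding proj_eq_def by (rule exI[of _ 1]) simp

lemma proj_eq_sym: "proj_eq x y \<Longrightarrow> proj_eq y x"
proof -
  assume "proj_eq x y"
  then obtain c where c: "c \<noteq> 0" "x = c *\<^sub>R y" unfolding proj_eq_def by blast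
  then have "y = inverse c *\<^sub>R x" by simp
  then show ?thesis unfolding proj_eq_def using c(1) by (intro exI[of _ "inverse c"]) auto
qed

lemma proj_eq_trans: "proj_eq x y \<Longrightarrow> proj_eq y z \<Longrightarrow> proj_eq x z"
proof -
  assume "proj_eq x y" "proj_eq y z"
  then obtain c d where c: "c \<noteq> 0" "x = c *\<^sub>R y" "d \<noteq> 0" "y = d *\<^sub>R z" unfolding proj_eq_def by blast
  then have "x = (c * d) *\<^sub>R z" by simp
  then show ?thesis unfolding proj_eq_def using c by (intro exI[of _ "c * d"]) auto
qed

lemma proj_eq_scale: "c \<noteq> 0 \<Longrightarrow> proj_eq (c *\<^sub>R x) x"
  unfolding proj_eq_def by blast

lemma proj_eq_mv: "proj_eq x y \<Longrightarrow> proj_eq (A *v x) (A *v y)"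
  unfolding proj_eq_def by (metis matrix_vector_mult_scaleR)

lemma inv_nonzero:
  fixes R :: "real^'n^'n"
  assumes "invertible R" "u \<noteq> 0" shows "R *v u \<noteq> 0"
proof
  assume "R *v u = 0"
  then have "matrix_inv R *v (R *v u) = 0" by simp
  then show False using inv_facts[OF assms(1)] assms(2) by (simp add: matrix_vector_mul_assoc)
qed

lemma bnd_mono: "bnd a A \<Longrightarrow> a \<le> b \<Longrightarrow> bnd b A"
  unfolding bnd_def by auto

lemma bnd_nonneg: "bnd a A \<Longrightarrow> 0 \<le> a"
  unfolding bnd_def using onorm_pos_le[OF matrix_vector_mul_bounded_linear] order_trans by blast

lemma onorm_mult_le:
  fixes A B :: "real^'n^'n"
  shows "onorm ((*v) (A ** B)) \<le> onorm ((*v) A) * onorm ((*v) B)"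
proof -
  have "(*v) (A ** B) = (*v) A \<circ> (*v) B" by (auto simp: matrix_vector_mul_assoc)
  then show ?thesis using onorm_compose[OF matrix_vector_mul_bounded_linear matrix_vector_mul_bounded_linear]
    by simp
qed

lemma inv_mult:
  fixes A B :: "real^'n^'n"
  assumes "invertible A" "invertible B"
  shows "invertible (A ** B) \<and> matrix_inv (A ** B) = matrix_inv B ** matrix_inv A"
proof -
  have "(A ** B) ** (matrix_inv B ** matrix_inv A) = A ** (B ** matrix_inv B) ** matrix_inv A"
    by (simp add: matrix_mul_assoc)
  also have "\<dots> = mat 1" using inv_facts[OF assms(1)] inv_facts[OF assms(2)] by simp
  finally show ?thesis by (rule right_inv_imp)
qed

lemma bnd_mult:
  fixes A B :: "real^'n^'n"
  assumes "invertible A" "invertible B" "bnd a A" "bnd b B"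
  shows "bnd (a * b) (A ** B)"
proof -
  have a0: "0 \<le> a" "0 \<le> b" using assms bnd_nonneg by blast+
  have "onorm ((*v) (A ** B)) \<le> a * b"
    using onorm_mult_le[of A B] assms(3,4) a0 unfolding bnd_def
    by (meson mult_mono onorm_pos_le[OF matrix_vector_mul_bounded_linear] order_trans)
  moreover have "onorm ((*v) (matrix_inv (A ** B))) \<le> a * b"
    using onorm_mult_le[of "matrix_inv B" "matrix_inv A"] assms(3,4) a0 inv_mult[OF assms(1,2)]
    unfolding bnd_def
    by (metis (no_types, opaque_lifting) mult.commute mult_mono onorm_pos_le[OF matrix_vector_mul_bounded_linear] order_trans)
  ultimately show ?thesis unfolding bnd_def by simp
qed

lemma inv_inv:
  fixes A :: "real^'n^'n"
  assumes "invertible A"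
  shows "invertible (matrix_inv A) \<and> matrix_inv (matrix_inv A) = A"
  using right_inv_imp inv_facts[OF assms] by blast

lemma bnd_inv:
  fixes A :: "real^'n^'n"
  assumes "invertible A" "bnd a A" shows "bnd a (matrix_inv A)"
  using assms inv_inv[OF assms(1)] unfolding bnd_def by simp



lemma baire_step:
  fixes S :: "(real^'n^'n) set" and u0 :: "real^'n"
  assumes acc: "accessible S" and u0: "u0 \<noteq> 0"
  shows "\<exists>k::nat. \<exists>w0 e. w0 \<in> sphere 0 1 \<and> e > 0 \<and>
     (\<forall>w\<in>sphere 0 1 \<inter> ball w0 e. \<exists>R\<in>S. bnd (real k) R \<and> proj_eq (R *v u0) w)"
proof (rule ccontr)
  assume nb: "\<not> ?thesis"
  have SGL: "S \<subseteq> GL" and cl: "closedin (top_of_set GL) S"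
    and tr: "\<And>u v. u \<noteq> 0 \<Longrightarrow> v \<noteq> 0 \<Longrightarrow> \<exists>R\<in>S. proj_eq (R *v u) v"
    using acc unfolding accessible_def is_GL_subgroup_def by auto
  define A where "A k = {w\<in>sphere 0 1. \<exists>R\<in>S. bnd (real k) R \<and> proj_eq (R *v u0) w}" for k :: nat
  define f where "f R = inverse (norm (R *v u0)) *\<^sub>R (R *v u0)" for R :: "real^'n^'n"
  define SK where "SK k = {R\<in>S. bnd (real k) R}" for k :: nat
  have nz: "R *v u0 \<noteq> 0" if "R \<in> S" for R
    using inv_nonzero[OF _ u0] that SGL unfolding GL_def by auto
  have Aeq: "A k = f ` SK k \<union> (\<lambda>R. - f R) ` SK k" for k
  proof
    show "A k \<subseteq> f ` SK k \<union> (\<lambda>R. - f R) ` SK k"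
    proof
      fix w assume "w \<in> A k"
      then obtain R c where R: "R \<in> S" "bnd (real k) R" "c \<noteq> 0" "R *v u0 = c *\<^sub>R w" and w: "norm w = 1"
        unfolding A_def proj_eq_def by auto
      have "f R = (inverse \<bar>c\<bar> * c) *\<^sub>R w" unfolding f_def using R(4) w by simp
      then have "w = f R \<or> w = - f R" using R(3) by (cases "c > 0") auto
      then show "w \<in> f ` SK k \<union> (\<lambda>R. - f R) ` SK k" using R unfolding SK_def by auto
    qed
  next
    show "f ` SK k \<union> (\<lambda>R. - f R) ` SK k \<subseteq> A k"
    proof
      fix w assume "w \<in> f ` SK k \<union> (\<lambda>R. - f R) ` SK k"
      then obtain R where R: "R \<in> S" "bnd (real k) R" and w: "w = f R \<or> w = - f R" unfolding SK_def by auto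
      have n: "norm (R *v u0) \<noteq> 0" using nz[OF R(1)] by simp
      have nw: "norm w = 1" using w n unfolding f_def by auto
      have e1: "R *v u0 = norm (R *v u0) *\<^sub>R f R" unfolding f_def using n by simp
      have "proj_eq (R *v u0) w"
      proof (cases "w = f R")
        case True then show ?thesis using e1 n unfolding proj_eq_def by blast
      next
        case False
        then have "w = - f R" using w by blast
        then have "R *v u0 = (- norm (R *v u0)) *\<^sub>R w" using e1 by simp
        then show ?thesis using n unfolding proj_eq_def by (intro exI[of _ "- norm (R *v u0)"]) simp
      qed
      then show "w \<in> A k" unfolding A_def using R nw by auto
    qed
  qed
  have cA: "closed (A k)" for k
  proof -
    have cK: "compact (SK k)" unfolding SK_def by (rule compact_SK[OF cl])
    have cmv: "continuous_on (SK k) (\<lambda>R. R *v u0)"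
      using continuous_on_subset[OF cont_mv] by blast
    have c1: "continuous_on (SK k) (\<lambda>R. norm (R *v u0))" using continuous_on_norm[OF cmv] .
    have c2: "continuous_on (SK k) (\<lambda>R. inverse (norm (R *v u0)))"
      by (rule continuous_on_inverse[OF c1]) (use nz in \<open>auto simp: SK_def\<close>)
    have cf: "continuous_on (SK k) f" unfolding f_def by (rule continuous_on_scaleR[OF c2 cmv])
    have "compact (f ` SK k)" by (rule compact_continuous_image[OF cf cK])
    moreover have "compact ((\<lambda>R. - f R) ` SK k)"
      by (rule compact_continuous_image[OF _ cK]) (intro continuous_intros cf)
    ultimately show ?thesis unfolding Aeq by (intro closed_Un compact_imp_closed)
  qed
  have cover: "\<exists>k. w \<in> A k" if w: "w \<in> sphere 0 1" for w
  proof -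
    have "w \<noteq> 0" using w by auto
    then obtain R where R: "R \<in> S" "proj_eq (R *v u0) w" using tr[OF u0] by blast
    obtain k :: nat where k: "max (onorm ((*v) R)) (onorm ((*v) (matrix_inv R))) \<le> real k"
      using real_arch_simple by blast
    have "bnd (real k) R" using k unfolding bnd_def by auto
    then show ?thesis using R w unfolding A_def by auto
  qed
  have dense: "sphere 0 1 \<subseteq> closure (sphere 0 1 - A k)" for k
  proof
    fix x assume x: "x \<in> sphere (0::real^'n) 1"
    show "x \<in> closure (sphere 0 1 - A k)"
      unfolding closure_approachable
    proof (rule ccontr)
      assume "\<not> (\<forall>\<epsilon>>0. \<exists>y\<in>sphere 0 1 - A k. dist y x < \<epsilon>)"
      then obtain e where e: "e > 0" "\<forall>y\<in>sphere 0 1 - A k. dist y x \<ge> e" by (auto simp: not_less)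
      have "\<forall>w\<in>sphere 0 1 \<inter> ball x e. \<exists>R\<in>S. bnd (real k) R \<and> proj_eq (R *v u0) w"
      proof
        fix w assume w: "w \<in> sphere 0 1 \<inter> ball x e"
        have w1: "w \<in> sphere 0 1" "dist w x < e" using w by (auto simp: dist_commute)
        have "w \<in> A k"
        proof (rule ccontr)
          assume "w \<notin> A k"
          then have "dist w x \<ge> e" using e(2) w1(1) by blast
          then show False using w1(2) by linarith
        qed
        then show "\<exists>R\<in>S. bnd (real k) R \<and> proj_eq (R *v u0) w" unfolding A_def by auto
      qed
      then show False using nb x e(1) by blast
    qed
  qed
  have Bl: "sphere (0::real^'n) 1 \<subseteq> closure (\<Inter> (range (\<lambda>k. sphere 0 1 - A k)))"
  proof (rule Baire)
    show "closed (sphere (0::real^'n) 1)" by simp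
    show "countable (range (\<lambda>k. sphere (0::real^'n) 1 - A k))" by simp
    fix T assume "T \<in> range (\<lambda>k. sphere (0::real^'n) 1 - A k)"
    then obtain k where T: "T = sphere 0 1 - A k" by blast
    have "openin (top_of_set (sphere 0 1)) (sphere 0 1 \<inter> - A k)"
      by (rule openin_open_Int) (use cA in auto)
    then show "openin (top_of_set (sphere 0 1)) T \<and> sphere 0 1 \<subseteq> closure T"
      using dense T by (simp add: Diff_eq)
  qed
  have E: "\<Inter> (range (\<lambda>k. sphere (0::real^'n) 1 - A k)) = {}"
  proof (rule equals0I)
    fix x assume "x \<in> \<Inter> (range (\<lambda>k. sphere (0::real^'n) 1 - A k))"
    then have "x \<in> sphere 0 1" "\<And>k. x \<notin> A k" by auto
    then show False using cover by blast
  qed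
  have "sphere (0::real^'n) 1 \<subseteq> closure {}" using Bl unfolding E .
  then have "sphere (0::real^'n) 1 \<subseteq> {}" by simp
  moreover have "axis undefined 1 \<in> sphere (0::real^'n) 1" by (simp add: norm_axis_1)
  ultimately show False by blast
qed


lemma unit_proj:
  fixes y w :: "real^'n"
  assumes "norm y = 1" "norm w = 1" "proj_eq y w" shows "y = w \<or> y = - w"
proof -
  obtain c where c: "c \<noteq> 0" "y = c *\<^sub>R w" using assms(3) unfolding proj_eq_def by blast
  then have "\<bar>c\<bar> = 1" using assms(1,2) by simp
  then have "c = 1 \<or> c = -1" by linarith
  then show ?thesis using c by auto
qed

lemma normalize_proj:
  fixes z :: "real^'n"
  assumes "z \<noteq> 0"
  shows "norm (inverse (norm z) *\<^sub>R z) = 1 \<and> proj_eq (inverse (norm z) *\<^sub>R z) z"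
  using assms by (auto intro: proj_eq_scale)

lemma subgroup_facts:
  assumes "accessible S"
  shows "S \<subseteq> GL" "\<And>A B. A \<in> S \<Longrightarrow> B \<in> S \<Longrightarrow> A ** B \<in> S"
    "\<And>A. A \<in> S \<Longrightarrow> matrix_inv A \<in> S"
    "\<And>u v. u \<noteq> 0 \<Longrightarrow> v \<noteq> 0 \<Longrightarrow> \<exists>R\<in>S. proj_eq (R *v u) v"
  using assms unfolding accessible_def is_GL_subgroup_def by auto

lemma unit_reach:
  fixes S :: "(real^'n^'n) set" and u0 :: "real^'n"
  assumes acc: "accessible S" and u0: "u0 \<noteq> 0"
  shows "\<exists>C. \<forall>x. x \<noteq> 0 \<longrightarrow> (\<exists>Q\<in>S. bnd C Q \<and> proj_eq (Q *v u0) x)"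
proof -
  note sg = subgroup_facts[OF acc]
  have invS: "invertible A" if "A \<in> S" for A using sg(1) that unfolding GL_def by auto
  obtain k :: nat and w0 e where w0: "w0 \<in> sphere 0 1" and e: "e > 0"
    and W: "\<forall>w\<in>sphere 0 1 \<inter> ball w0 e. \<exists>R\<in>S. bnd (real k) R \<and> proj_eq (R *v u0) w"
    using baire_step[OF acc u0] by blast
  have W2: "\<exists>R\<in>S. bnd (real k) R \<and> proj_eq (R *v u0) w"
    if w: "w \<in> sphere 0 1" "w \<in> ball w0 e \<union> ball (- w0) e" for w
  proof (cases "w \<in> ball w0 e")
    case True then show ?thesis using W w by blast
  next
    case False
    then have "w \<in> ball (- w0) e" using w by blast
    then have "norm (- w0 - w) < e" by (simp add: dist_norm)
    moreover have "- w0 - w = - (w0 - (- w))" by simp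
    ultimately have "norm (w0 - (- w)) < e" by (metis norm_minus_cancel)
    then have "- w \<in> ball w0 e" by (simp only: mem_ball dist_norm)
    moreover have "- w \<in> sphere 0 1" using w(1) by simp
    ultimately have "- w \<in> sphere 0 1 \<inter> ball w0 e" by blast
    then obtain R where R: "R \<in> S" "bnd (real k) R" "proj_eq (R *v u0) (- w)" using W by blast
    have "proj_eq (- w) w" using proj_eq_scale[of "-1" w] by simp
    then show ?thesis using R proj_eq_trans by blast
  qed
  have w00: "w0 \<noteq> 0" using w0 by auto
  have "\<forall>v\<in>sphere 0 1. \<exists>R. R \<in> S \<and> proj_eq (R *v w0) v"
  proof
    fix v :: "real^'n" assume "v \<in> sphere 0 1"
    then have "v \<noteq> 0" by auto
    then show "\<exists>R. R \<in> S \<and> proj_eq (R *v w0) v" using sg(4)[OF w00] by blast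
  qed
  then obtain Rf where Rf: "\<forall>v\<in>sphere 0 1. Rf v \<in> S \<and> proj_eq (Rf v *v w0) v"
    using bchoice[of "sphere 0 1" "\<lambda>v R. R \<in> S \<and> proj_eq (R *v w0) v"] by blast
  define h where "h v x = inverse (norm (matrix_inv (Rf v) *v x)) *\<^sub>R (matrix_inv (Rf v) *v x)"
    for v x
  define Op where "Op v = (- {0}) \<inter> h v -` (ball w0 e \<union> ball (- w0) e)" for v
  have gnz: "matrix_inv (Rf v) *v x \<noteq> 0" if "v \<in> sphere 0 1" "x \<noteq> 0" for v x
    using inv_nonzero[OF _ that(2)] inv_inv[OF invS] Rf that(1) by blast
  have openO: "open (Op v)" if "v \<in> sphere 0 1" for v
  proof -
    have cmv: "continuous_on (- {0}) (\<lambda>x. matrix_inv (Rf v) *v x)"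
      by (intro continuous_intros)
    have c2: "continuous_on (- {0}) (\<lambda>x. inverse (norm (matrix_inv (Rf v) *v x)))"
      by (rule continuous_on_inverse[OF continuous_on_norm[OF cmv]]) (use gnz that in auto)
    have "continuous_on (- {0}) (h v)" unfolding h_def by (rule continuous_on_scaleR[OF c2 cmv])
    then show ?thesis unfolding Op_def by (rule continuous_open_preimage) auto
  qed
  have vO: "v \<in> Op v" if v: "v \<in> sphere 0 1" for v
  proof -
    have v0: "v \<noteq> 0" using v by auto
    have iR: "invertible (Rf v)" using invS Rf v by blast
    have "proj_eq (matrix_inv (Rf v) *v (Rf v *v w0)) (matrix_inv (Rf v) *v v)"
      using proj_eq_mv Rf v by blast
    then have p1: "proj_eq w0 (matrix_inv (Rf v) *v v)"
      using inv_facts[OF iR] by (simp add: matrix_vector_mul_assoc)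
    have n: "norm (h v v) = 1 \<and> proj_eq (h v v) (matrix_inv (Rf v) *v v)"
      unfolding h_def by (rule normalize_proj[OF gnz[OF v v0]])
    then have "proj_eq (h v v) w0" using p1 proj_eq_sym proj_eq_trans by blast
    then have "h v v = w0 \<or> h v v = - w0" using unit_proj n w0 by auto
    then have "h v v \<in> ball w0 e \<union> ball (- w0) e" using e by auto
    then show ?thesis unfolding Op_def using v0 by auto
  qed
  obtain D where D: "D \<subseteq> sphere 0 1" "finite D" "sphere 0 1 \<subseteq> \<Union> (Op ` D)"
  proof (rule compactE_image[OF compact_sphere, of "sphere 0 1" Op])
    show "\<And>T. T \<in> sphere 0 1 \<Longrightarrow> open (Op T)" by (rule openO)
    show "sphere 0 1 \<subseteq> \<Union> (Op ` sphere 0 1)" using vO by blast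
  qed (rule that)
  define B where "B = (\<Sum>v\<in>D. onorm ((*v) (Rf v)) + onorm ((*v) (matrix_inv (Rf v))))"
  have bB: "bnd B (Rf v)" if "v \<in> D" for v
  proof -
    have nn: "\<And>v. 0 \<le> onorm ((*v) (Rf v)) + onorm ((*v) (matrix_inv (Rf v)))"
      by (intro add_nonneg_nonneg onorm_pos_le matrix_vector_mul_bounded_linear)
    have "onorm ((*v) (Rf v)) + onorm ((*v) (matrix_inv (Rf v))) \<le> B"
      unfolding B_def using member_le_sum[of v D "\<lambda>v. onorm ((*v) (Rf v)) + onorm ((*v) (matrix_inv (Rf v)))"]
        nn that D(2) by blast
    then show ?thesis unfolding bnd_def
      using onorm_pos_le[OF matrix_vector_mul_bounded_linear, of "Rf v"]
        onorm_pos_le[OF matrix_vector_mul_bounded_linear, of "matrix_inv (Rf v)"]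
      by (intro conjI; linarith)
  qed
  show ?thesis
  proof (intro exI allI impI)
    fix x :: "real^'n" assume x0: "x \<noteq> 0"
    define x' where "x' = inverse (norm x) *\<^sub>R x"
    have x': "norm x' = 1" "proj_eq x' x" unfolding x'_def using normalize_proj[OF x0] by auto
    then have "x' \<in> sphere 0 1" by simp
    then obtain v where v: "v \<in> D" "x' \<in> Op v" using D(3) by blast
    have vs: "v \<in> sphere 0 1" using v D(1) by blast
    have x'0: "x' \<noteq> 0" using x' by auto
    have iR: "invertible (Rf v)" using invS Rf vs by blast
    have hy: "h v x' \<in> ball w0 e \<union> ball (- w0) e" using v unfolding Op_def by auto
    have n: "norm (h v x') = 1 \<and> proj_eq (h v x') (matrix_inv (Rf v) *v x')"
      unfolding h_def by (rule normalize_proj[OF gnz[OF vs x'0]])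
    then obtain R where R: "R \<in> S" "bnd (real k) R" "proj_eq (R *v u0) (h v x')"
      using W2[of "h v x'"] hy by auto
    define Q where "Q = Rf v ** R"
    have QS: "Q \<in> S" unfolding Q_def using sg(2) Rf vs R(1) by blast
    have Qb: "bnd (B * real k) Q" unfolding Q_def
      by (rule bnd_mult[OF iR invS[OF R(1)] bB[OF v(1)] R(2)])
    have p1: "proj_eq (Q *v u0) (Rf v *v h v x')"
      unfolding Q_def using proj_eq_mv[OF R(3)] by (simp add: matrix_vector_mul_assoc)
    have "proj_eq (Rf v *v h v x') (Rf v *v (matrix_inv (Rf v) *v x'))"
      using proj_eq_mv n by blast
    then have p2: "proj_eq (Rf v *v h v x') x'"
      using inv_facts[OF iR] by (simp add: matrix_vector_mul_assoc)
    have "proj_eq (Q *v u0) x" using p1 p2 x'(2) proj_eq_trans by blast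
    then show "\<exists>Q\<in>S. bnd (B * real k) Q \<and> proj_eq (Q *v u0) x" using QS Qb by blast
  qed
qed

theorem lemma2p5:
  fixes S :: "(real^'n^'n) set"
  assumes "accessible S"
  shows "\<exists>K>0. \<forall>u v. u \<noteq> 0 \<longrightarrow> v \<noteq> 0 \<longrightarrow>
           (\<exists>R\<in>S. onorm (\<lambda>x. R *v x) \<le> K \<and> onorm (\<lambda>x. matrix_inv R *v x) \<le> K
                   \<and> proj_eq (R *v u) v)"
proof -
  note sg = subgroup_facts[OF assms]
  have invS: "invertible A" if "A \<in> S" for A using sg(1) that unfolding GL_def by auto
  define u0 :: "real^'n" where "u0 = axis undefined 1"
  have u0: "u0 \<noteq> 0" unfolding u0_def by (metis norm_axis_1 norm_zero zero_neq_one)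
  obtain C where C: "\<And>x. x \<noteq> 0 \<Longrightarrow> \<exists>Q\<in>S. bnd C Q \<and> proj_eq (Q *v u0) x"
    using unit_reach[OF assms u0] by blast
  have C0: "0 \<le> C" using C[OF u0] bnd_nonneg by blast
  show ?thesis
  proof (intro exI conjI allI impI)
    show "0 < C * C + 1" using C0 by (simp add: add_nonneg_pos)
    fix u v :: "real^'n" assume u: "u \<noteq> 0" and v: "v \<noteq> 0"
    obtain T where T: "T \<in> S" "bnd C T" "proj_eq (T *v u0) u" using C[OF u] by blast
    obtain Q where Q: "Q \<in> S" "bnd C Q" "proj_eq (Q *v u0) v" using C[OF v] by blast
    have iT: "invertible T" using invS T(1) by blast
    define P where "P = Q ** matrix_inv T"
    have PS: "P \<in> S" unfolding P_def using sg(2,3) T(1) Q(1) by blast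
    have Pb: "bnd (C * C) P" unfolding P_def
      by (rule bnd_mult[OF invS[OF Q(1)] conjunct1[OF inv_inv[OF iT]] Q(2) bnd_inv[OF iT T(2)]])
    then have Pb': "bnd (C * C + 1) P" by (rule bnd_mono) simp
    have "proj_eq (matrix_inv T *v (T *v u0)) (matrix_inv T *v u)" using proj_eq_mv T(3) by blast
    then have "proj_eq u0 (matrix_inv T *v u)" using inv_facts[OF iT] by (simp add: matrix_vector_mul_assoc)
    then have "proj_eq (Q *v (matrix_inv T *v u)) (Q *v u0)" using proj_eq_mv proj_eq_sym by blast
    then have "proj_eq (P *v u) v" unfolding P_def using Q(3) proj_eq_trans
      by (metis matrix_vector_mul_assoc)
    then show "\<exists>R\<in>S. onorm (\<lambda>x. R *v x) \<le> C * C + 1 \<and> onorm (\<lambda>x. matrix_inv R *v x) \<le> C * C + 1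
                   \<and> proj_eq (R *v u) v"
      using PS Pb' unfolding bnd_def by blast
  qed
qed

end
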